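(* Let $\mathfrak{g}$ be a complete Lie algebra. Then $\mathrm{HL}^2(\mathfrak{g},\mathfrak{g}_{\mathrm{ad}})\cong\mathrm{H}^2(\mathfrak{g},\mathfrak{g})$ and $\mathrm{HL}^3(\mathfrak{g},\mathfrak{g}_{\mathrm{ad}})\cong\mathrm{H}^3(\mathfrak{g},\mathfrak{g})$.
   Context: A Lie algebra $\mathfrak{g}$ is complete if $\mathrm{H}^0(\mathfrak{g},\mathfrak{g})=\mathrm{H}^1(\mathfrak{g},\mathfrak{g})=0$ (Chevalley–Eilenberg cohomology with adjoint coefficients). $\mathfrak{g}$ is regarded as a left Leibniz algebra with $xy=[x,y]$, and $\mathfrak{g}_{\mathrm{ad}}$ is the (symmetric) Leibniz bimodule $\mathfrak{g}$ with left and right multiplication as actions. $\mathrm{HL}^n(\mathfrak{g},M)$ is the cohomology of $\mathrm{Hom}(\mathfrak{g}^{\otimes n},M)$ with $(\mathrm{d}^nf)(x_1,\dots,x_{n+1})=\sum_{i=1}^n(-1)^{i+1}x_i\cdot f(\dots,\hat{x}_i,\dots)+(-1)^{n+1}f(x_1,\dots,x_n)\cdot x_{n+1}+\sum_{i<j}(-1)^if(x_1,\dots,\hat{x}_i,\dots,x_ix_j,\dots,x_{n+1})$ ($x_ix_j$ in the $j$-th position). *)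

theory Defs
  imports Complex_Main "HOL-Library.Function_Algebras"
begin

definition lie_algebra :: "('k::field \<Rightarrow> 'g::ab_group_add \<Rightarrow> 'g) \<Rightarrow> ('g \<Rightarrow> 'g \<Rightarrow> 'g) \<Rightarrow> bool" where
  "lie_algebra scale br \<longleftrightarrow>
     Vector_Spaces.vector_space scale \<and>
     (\<forall>x y z. br (x + y) z = br x z + br y z) \<and>
     (\<forall>x y z. br x (y + z) = br x y + br x z) \<and>
     (\<forall>c x y. br (scale c x) y = scale c (br x y)) \<and>
     (\<forall>c x y. br x (scale c y) = scale c (br x y)) \<and>
     (\<forall>x. br x x = 0) \<and>
     (\<forall>x y z. br x (br y z) + br y (br z x) + br z (br x y) = 0)"

text \<open>n-cochains: maps g^n \<rightarrow> g, represented as functions on lists of length n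
(value 0 on lists of any other length), linear in each argument, i.e.
elements of Hom(g^{\<otimes>n}, g).\<close>

definition multilinear :: "('k::field \<Rightarrow> 'g::ab_group_add \<Rightarrow> 'g) \<Rightarrow> nat \<Rightarrow> ('g list \<Rightarrow> 'g) \<Rightarrow> bool" where
  "multilinear scale n f \<longleftrightarrow>
     (\<forall>xs. length xs \<noteq> n \<longrightarrow> f xs = 0) \<and>
     (\<forall>xs i y z. length xs = n \<and> i < n \<longrightarrow>
         f (xs[i := y + z]) = f (xs[i := y]) + f (xs[i := z])) \<and>
     (\<forall>xs i c y. length xs = n \<and> i < n \<longrightarrow>
         f (xs[i := scale c y]) = scale c (f (xs[i := y])))"

text \<open>Alternating cochains = Hom(\<Lambda>^n g, g): vanish when two arguments coincide.\<close>
definition alternating :: "('k::field \<Rightarrow> 'g::ab_group_add \<Rightarrow> 'g) \<Rightarrow> nat \<Rightarrow> ('g list \<Rightarrow> 'g) \<Rightarrow> bool" where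
  "alternating scale n f \<longleftrightarrow> multilinear scale n f \<and>
     (\<forall>xs i j. length xs = n \<and> i < j \<and> j < n \<and> xs ! i = xs ! j \<longrightarrow> f xs = 0)"

definition sgnp :: "nat \<Rightarrow> 'g::ab_group_add \<Rightarrow> 'g" where
  "sgnp i v = (if even i then v else - v)"

definition remove_at :: "nat \<Rightarrow> 'a list \<Rightarrow> 'a list" where
  "remove_at i xs = take i xs @ drop (Suc i) xs"

text \<open>Leibniz differential d^n with coefficients in g_ad (left action x\<cdot>m = [x,m],
right action m\<cdot>x = [m,x], product x_i x_j = [x_i,x_j]), 0-based indices:
(d f)(x_0..x_n) = \<Sum>_{i<n} (-1)^i [x_i, f(..omit x_i..)] + (-1)^{n+1} [f(x_0..x_{n-1}), x_n]
 + \<Sum>_{i<j\<le>n} (-1)^{i+1} f(x_0,..,omit x_i,..,[x_i,x_j] (at place of x_j),..,x_n).\<close>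
definition dL :: "('g::ab_group_add \<Rightarrow> 'g \<Rightarrow> 'g) \<Rightarrow> nat \<Rightarrow> ('g list \<Rightarrow> 'g) \<Rightarrow> ('g list \<Rightarrow> 'g)" where
  "dL br n f = (\<lambda>xs. if length xs \<noteq> Suc n then 0 else
      (\<Sum>i<n. sgnp i (br (xs ! i) (f (remove_at i xs))))
      + sgnp (Suc n) (br (f (take n xs)) (xs ! n))
      + (\<Sum>j\<le>n. \<Sum>i<j. sgnp (Suc i) (f (remove_at i (xs[j := br (xs ! i) (xs ! j)])))))"

definition dCE :: "('g::ab_group_add \<Rightarrow> 'g \<Rightarrow> 'g) \<Rightarrow> nat \<Rightarrow> ('g list \<Rightarrow> 'g) \<Rightarrow> ('g list \<Rightarrow> 'g)" where
  "dCE br n f = (\<lambda>xs. if length xs \<noteq> Suc n then 0 else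
      (\<Sum>i\<le>n. sgnp i (br (xs ! i) (f (remove_at i xs))))
      + (\<Sum>j\<le>n. \<Sum>i<j. sgnp (i + j) (f (br (xs ! i) (xs ! j) # remove_at i (remove_at j xs)))))"

definition CL where "CL scale n = {f. multilinear scale n f}"
definition ZL where "ZL scale br n = {f \<in> CL scale n. dL br n f = 0}"
definition BL where "BL scale br n = (if n = 0 then {0} else dL br (n - 1) ` CL scale (n - 1))"

definition CCE where "CCE scale n = {f. alternating scale n f}"
definition ZCE where "ZCE scale br n = {f \<in> CCE scale n. dCE br n f = 0}"
definition BCE where "BCE scale br n = (if n = 0 then {0} else dCE br (n - 1) ` CCE scale (n - 1))"

text \<open>Isomorphism of the quotient spaces Z1/B1 and Z2/B2, written out on representatives:
a linear map Z1 \<rightarrow> Z2 inducing a bijection Z1/B1 \<rightarrow> Z2/B2.\<close>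
definition quot_iso :: "('k::field \<Rightarrow> 'g::ab_group_add \<Rightarrow> 'g) \<Rightarrow> ('g list \<Rightarrow> 'g) set \<Rightarrow> ('g list \<Rightarrow> 'g) set
     \<Rightarrow> ('g list \<Rightarrow> 'g) set \<Rightarrow> ('g list \<Rightarrow> 'g) set \<Rightarrow> bool" where
  "quot_iso scale Z1 B1 Z2 B2 \<longleftrightarrow> (\<exists>\<phi>.
     (\<forall>a\<in>Z1. \<phi> a \<in> Z2) \<and>
     (\<forall>a\<in>Z1. \<forall>b\<in>Z1. \<phi> (a + b) = \<phi> a + \<phi> b) \<and>
     (\<forall>c. \<forall>a\<in>Z1. \<phi> (\<lambda>xs. scale c (a xs)) = (\<lambda>xs. scale c (\<phi> a xs))) \<and>
     (\<forall>a\<in>Z1. \<phi> a \<in> B2 \<longleftrightarrow> a \<in> B1) \<and>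
     (\<forall>b\<in>Z2. \<exists>a\<in>Z1. b - \<phi> a \<in> B2))"

definition HL_iso_H where
  "HL_iso_H scale br n \<longleftrightarrow> quot_iso scale (ZL scale br n) (BL scale br n) (ZCE scale br n) (BCE scale br n)"

definition complete_lie where
  "complete_lie scale br \<longleftrightarrow> ZCE scale br 0 = BCE scale br 0 \<and> ZCE scale br 1 = BCE scale br 1"

end

theory Submission
  imports Defs
begin


lemma sgnp_simps[simp]: "sgnp 0 v = v" "sgnp 1 v = - v" "sgnp 2 v = v" "sgnp 3 v = - v" "sgnp 4 v = v" "sgnp 5 v = - v"
  by (simp_all add: sgnp_def)

lemma sgnp_Suc: "sgnp (Suc n) v = - sgnp n v"
  by (simp add: sgnp_def)

lemma dL1_expl: "dL br 1 f [a,b] = br a (f[b]) + br (f[a]) b - f[br a b]"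
  by (simp add: dL_def remove_at_def sgnp_Suc)

lemma dCE1_expl: "dCE br 1 f [a,b] = br a (f[b]) - br b (f[a]) - f[br a b]"
  by (simp add: dCE_def remove_at_def sgnp_Suc)

lemma dCE0_expl: "dCE br 0 f [a] = br a (f[])"
  by (simp add: dCE_def remove_at_def sgnp_Suc)

lemma dL2_expl: "dL br 2 f [a,b,c] = br a (f[b,c]) - br b (f[a,c]) - br (f[a,b]) c - f[br a b, c] - f[b, br a c] + f[a, br b c]"
  by (simp add: dL_def remove_at_def sgnp_Suc numeral_2_eq_2 lessThan_Suc atMost_Suc algebra_simps)

lemma dCE2_expl: "dCE br 2 f [a,b,c] = br a (f[b,c]) - br b (f[a,c]) + br c (f[a,b]) - f[br a b, c] + f[br a c, b] - f[br b c, a]"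
  by (simp add: dCE_def remove_at_def sgnp_Suc numeral_2_eq_2 lessThan_Suc atMost_Suc algebra_simps)

lemma dL3_expl: "dL br 3 f [a,b,c,d] = br a (f[b,c,d]) - br b (f[a,c,d]) + br c (f[a,b,d]) + br (f[a,b,c]) d
   - f[br a b, c, d] - f[b, br a c, d] - f[b, c, br a d] + f[a, br b c, d] + f[a, c, br b d] - f[a, b, br c d]"
  by (simp add: dL_def remove_at_def sgnp_Suc numeral_3_eq_3 lessThan_Suc atMost_Suc algebra_simps)

lemma dCE3_expl: "dCE br 3 f [a,b,c,d] = br a (f[b,c,d]) - br b (f[a,c,d]) + br c (f[a,b,d]) - br d (f[a,b,c])
   - f[br a b, c, d] + f[br a c, b, d] - f[br a d, b, c] - f[br b c, a, d] + f[br b d, a, c] - f[br c d, a, b]"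
  by (simp add: dCE_def remove_at_def sgnp_Suc numeral_3_eq_3 lessThan_Suc atMost_Suc algebra_simps)

lemma lin3: "a + b + c = (0::'a::ab_group_add) \<Longrightarrow> a = - b - c"
  by (metis add.commute add_diff_cancel_left' add_uminus_conv_diff diff_0)

lemma len3: "length xs = 3 \<Longrightarrow> \<exists>a b c. xs = [a,b,c]"
  by (auto simp: numeral_3_eq_3 length_Suc_conv)
lemma len4: "length xs = 4 \<Longrightarrow> \<exists>a b c d. xs = [a,b,c,d]"
  by (auto simp: numeral_eq_Suc length_Suc_conv)
lemma len2: "length xs = 2 \<Longrightarrow> \<exists>a b. xs = [a,b]"
  by (auto simp: numeral_2_eq_2 length_Suc_conv)
lemma len1: "length xs = 1 \<Longrightarrow> \<exists>a. xs = [a]"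
  by (auto simp: length_Suc_conv)

context
  fixes scale :: "'k::field \<Rightarrow> 'g::ab_group_add \<Rightarrow> 'g" and br :: "'g \<Rightarrow> 'g \<Rightarrow> 'g"
  assumes lie: "lie_algebra scale br"
begin

interpretation vs: vector_space scale using lie by (simp add: lie_algebra_def)

lemma br_addl: "br (x + y) z = br x z + br y z" using lie by (simp add: lie_algebra_def)
lemma br_addr: "br x (y + z) = br x y + br x z" using lie by (simp add: lie_algebra_def)
lemma br_scalel: "br (scale c x) y = scale c (br x y)" using lie by (simp add: lie_algebra_def)
lemma br_scaler: "br x (scale c y) = scale c (br x y)" using lie by (simp add: lie_algebra_def)
lemma br_self: "br x x = 0" using lie by (simp add: lie_algebra_def)
lemma jac0: "br x (br y z) + br y (br z x) + br z (br x y) = 0" using lie by (simp add: lie_algebra_def)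
lemma br_0l: "br 0 y = 0" using br_addl[of 0 0 y] by simp
lemma br_0r: "br y 0 = 0" using br_addr[of y 0 0] by simp
lemma br_minusl: "br (- x) y = - br x y"
proof -
  have "br x y + br (-x) y = 0" using br_addl[of x "-x" y] by (simp add: br_0l)
  then show ?thesis by (simp only: add_eq_0_iff)
qed
lemma br_minusr: "br y (- x) = - br y x"
proof -
  have "br y x + br y (-x) = 0" using br_addr[of y x "-x"] by (simp add: br_0r)
  then show ?thesis by (simp only: add_eq_0_iff)
qed
lemma br_diffl: "br (x - y) z = br x z - br y z" by (simp only: diff_conv_add_uminus br_addl br_minusl)
lemma br_diffr: "br z (x - y) = br z x - br z y" by (simp only: diff_conv_add_uminus br_addr br_minusr)
lemma br_anti: "br y x = - br x y"
proof -
  have "br (x+y) (x+y) = br x x + br x y + (br y x + br y y)" by (simp only: br_addl br_addr ac_simps)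
  then have "br x y + br y x = 0" by (simp add: br_self)
  then show ?thesis by (simp only: add_eq_0_iff)
qed
lemma jac: "br (br x y) z = br x (br y z) - br y (br x z)"
proof -
  have "br z (br x y) + br x (br y z) + br y (br z x) = 0" by (rule jac0)
  moreover have "br (br x y) z = - br z (br x y)" by (rule br_anti)
  moreover have "br z x = - br x z" by (rule br_anti)
  ultimately have "br (br x y) z = - (- br x (br y z) - br y (br z x))" using lin3 by metis
  then show ?thesis using \<open>br z x = - br x z\<close> by (simp add: br_minusr)
qed

lemmas br_lin = br_addl br_addr br_minusl br_minusr br_diffl br_diffr br_0l br_0r br_scalel br_scaler

end



context
  fixes scale :: "'k::field \<Rightarrow> 'g::ab_group_add \<Rightarrow> 'g" and br :: "'g \<Rightarrow> 'g \<Rightarrow> 'g"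
  assumes lie: "lie_algebra scale br"
begin

interpretation vs: vector_space scale using lie by (simp add: lie_algebra_def)

lemmas brl = br_lin[OF lie]

lemma ml_add: "multilinear scale n f \<Longrightarrow> length xs = n \<Longrightarrow> i < n \<Longrightarrow> f (xs[i := y + z]) = f (xs[i := y]) + f (xs[i := z])"
  by (simp add: multilinear_def)
lemma ml_scale: "multilinear scale n f \<Longrightarrow> length xs = n \<Longrightarrow> i < n \<Longrightarrow> f (xs[i := scale k y]) = scale k (f (xs[i := y]))"
  by (simp add: multilinear_def)
lemma ml_zero: "multilinear scale n f \<Longrightarrow> length xs = n \<Longrightarrow> i < n \<Longrightarrow> f (xs[i := 0]) = 0"
  using ml_add[of n f xs i 0 0] by simp
lemma ml_minus: "multilinear scale n f \<Longrightarrow> length xs = n \<Longrightarrow> i < n \<Longrightarrow> f (xs[i := - y]) = - f (xs[i := y])"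
  using ml_add[of n f xs i y "- y"] ml_zero[of n f xs i] by (simp add: add_eq_0_iff)
lemma ml_diff: "multilinear scale n f \<Longrightarrow> length xs = n \<Longrightarrow> i < n \<Longrightarrow> f (xs[i := y - z]) = f (xs[i := y]) - f (xs[i := z])"
  using ml_add[of n f xs i y "- z"] ml_minus[of n f xs i z] by simp

lemma ml_diff_fun: "multilinear scale n f \<Longrightarrow> multilinear scale n g \<Longrightarrow> multilinear scale n (f - g)"
  unfolding multilinear_def by (simp add: vs.scale_right_diff_distrib)
lemma ml_add_fun: "multilinear scale n f \<Longrightarrow> multilinear scale n g \<Longrightarrow> multilinear scale n (f + g)"
  unfolding multilinear_def by (simp add: vs.scale_right_distrib)

lemma ml2_add0: "multilinear scale 2 f \<Longrightarrow> f [y + z, b] = f [y, b] + f [z, b]"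
  using ml_add[of 2 f "[y, b]" 0 y z] by simp
lemma ml2_zero0: "multilinear scale 2 f \<Longrightarrow> f [0, b] = 0"
  using ml_zero[of 2 f "[y, b]" 0] by simp
lemma ml2_minus0: "multilinear scale 2 f \<Longrightarrow> f [- y, b] = - f [y, b]"
  using ml_minus[of 2 f "[y, b]" 0 y] by simp
lemma ml2_diff0: "multilinear scale 2 f \<Longrightarrow> f [y - z, b] = f [y, b] - f [z, b]"
  using ml_diff[of 2 f "[y, b]" 0 y z] by simp
lemma ml2_scale0: "multilinear scale 2 f \<Longrightarrow> f [scale k y, b] = scale k (f [y, b])"
  using ml_scale[of 2 f "[y, b]" 0 k y] by simp
lemma ml2_add1: "multilinear scale 2 f \<Longrightarrow> f [a, y + z] = f [a, y] + f [a, z]"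
  using ml_add[of 2 f "[a, y]" 1 y z] by simp
lemma ml2_zero1: "multilinear scale 2 f \<Longrightarrow> f [a, 0] = 0"
  using ml_zero[of 2 f "[a, y]" 1] by simp
lemma ml2_minus1: "multilinear scale 2 f \<Longrightarrow> f [a, - y] = - f [a, y]"
  using ml_minus[of 2 f "[a, y]" 1 y] by simp
lemma ml2_diff1: "multilinear scale 2 f \<Longrightarrow> f [a, y - z] = f [a, y] - f [a, z]"
  using ml_diff[of 2 f "[a, y]" 1 y z] by simp
lemma ml2_scale1: "multilinear scale 2 f \<Longrightarrow> f [a, scale k y] = scale k (f [a, y])"
  using ml_scale[of 2 f "[a, y]" 1 k y] by simp
lemmas ml2_lin = ml2_add0 ml2_zero0 ml2_minus0 ml2_diff0 ml2_scale0 ml2_add1 ml2_zero1 ml2_minus1 ml2_diff1 ml2_scale1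
lemma ml3_add0: "multilinear scale 3 f \<Longrightarrow> f [y + z, b, c] = f [y, b, c] + f [z, b, c]"
  using ml_add[of 3 f "[y, b, c]" 0 y z] by simp
lemma ml3_zero0: "multilinear scale 3 f \<Longrightarrow> f [0, b, c] = 0"
  using ml_zero[of 3 f "[y, b, c]" 0] by simp
lemma ml3_minus0: "multilinear scale 3 f \<Longrightarrow> f [- y, b, c] = - f [y, b, c]"
  using ml_minus[of 3 f "[y, b, c]" 0 y] by simp
lemma ml3_diff0: "multilinear scale 3 f \<Longrightarrow> f [y - z, b, c] = f [y, b, c] - f [z, b, c]"
  using ml_diff[of 3 f "[y, b, c]" 0 y z] by simp
lemma ml3_scale0: "multilinear scale 3 f \<Longrightarrow> f [scale k y, b, c] = scale k (f [y, b, c])"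
  using ml_scale[of 3 f "[y, b, c]" 0 k y] by simp
lemma ml3_add1: "multilinear scale 3 f \<Longrightarrow> f [a, y + z, c] = f [a, y, c] + f [a, z, c]"
  using ml_add[of 3 f "[a, y, c]" 1 y z] by simp
lemma ml3_zero1: "multilinear scale 3 f \<Longrightarrow> f [a, 0, c] = 0"
  using ml_zero[of 3 f "[a, y, c]" 1] by simp
lemma ml3_minus1: "multilinear scale 3 f \<Longrightarrow> f [a, - y, c] = - f [a, y, c]"
  using ml_minus[of 3 f "[a, y, c]" 1 y] by simp
lemma ml3_diff1: "multilinear scale 3 f \<Longrightarrow> f [a, y - z, c] = f [a, y, c] - f [a, z, c]"
  using ml_diff[of 3 f "[a, y, c]" 1 y z] by simp
lemma ml3_scale1: "multilinear scale 3 f \<Longrightarrow> f [a, scale k y, c] = scale k (f [a, y, c])"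
  using ml_scale[of 3 f "[a, y, c]" 1 k y] by simp
lemma ml3_add2: "multilinear scale 3 f \<Longrightarrow> f [a, b, y + z] = f [a, b, y] + f [a, b, z]"
  using ml_add[of 3 f "[a, b, y]" 2 y z] by simp
lemma ml3_zero2: "multilinear scale 3 f \<Longrightarrow> f [a, b, 0] = 0"
  using ml_zero[of 3 f "[a, b, y]" 2] by simp
lemma ml3_minus2: "multilinear scale 3 f \<Longrightarrow> f [a, b, - y] = - f [a, b, y]"
  using ml_minus[of 3 f "[a, b, y]" 2 y] by simp
lemma ml3_diff2: "multilinear scale 3 f \<Longrightarrow> f [a, b, y - z] = f [a, b, y] - f [a, b, z]"
  using ml_diff[of 3 f "[a, b, y]" 2 y z] by simp
lemma ml3_scale2: "multilinear scale 3 f \<Longrightarrow> f [a, b, scale k y] = scale k (f [a, b, y])"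
  using ml_scale[of 3 f "[a, b, y]" 2 k y] by simp
lemmas ml3_lin = ml3_add0 ml3_zero0 ml3_minus0 ml3_diff0 ml3_scale0 ml3_add1 ml3_zero1 ml3_minus1 ml3_diff1 ml3_scale1 ml3_add2 ml3_zero2 ml3_minus2 ml3_diff2 ml3_scale2

lemma alt_ml: "alternating scale n f \<Longrightarrow> multilinear scale n f" by (simp add: alternating_def)

lemma alt2_diag: assumes "alternating scale 2 f" shows "f [a, a] = 0"
proof -
  have h: "\<forall>xs i j. length xs = 2 \<and> i < j \<and> j < 2 \<and> xs ! i = xs ! j \<longrightarrow> f xs = 0"
    using assms unfolding alternating_def by blast
  show ?thesis using h[rule_format, of "[a, a]" 0 1] by (simp)
qed

lemma pol2: assumes "multilinear scale 2 f" "\<And>a. f [a,a] = 0" shows "f [b, a] = - f [a, b]"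
proof -
  have "f [a+b, a+b] = f[a,a] + f[a,b] + (f[b,a] + f[b,b])" using assms(1) by (simp add: ml2_lin ac_simps)
  then have "f[a,b] + f[b,a] = 0" using assms(2) by simp
  then show ?thesis by (simp only: add_eq_0_iff)
qed

lemma alt2_anti: "alternating scale 2 f \<Longrightarrow> f [b, a] = - f [a, b]"
  using pol2[of f] alt2_diag[of f] alt_ml[of 2 f] by blast

lemma alt2_intro: assumes "multilinear scale 2 f" "\<And>a. f [a,a] = 0" shows "alternating scale 2 f"
  unfolding alternating_def
proof (intro conjI allI impI)
  fix xs :: "'g list" and i j assume h: "length xs = 2 \<and> i < j \<and> j < 2 \<and> xs ! i = xs ! j"
  then obtain a b where xs: "xs = [a,b]" using len2 by blast
  from h have "i = 0" "j = 1" by auto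
  with h xs show "f xs = 0" using assms(2) by simp
qed (rule assms(1))

lemma alt3_diag01: assumes "alternating scale 3 f" shows "f [a, a, c] = 0"
proof -
  have h: "\<forall>xs i j. length xs = 3 \<and> i < j \<and> j < 3 \<and> xs ! i = xs ! j \<longrightarrow> f xs = 0"
    using assms unfolding alternating_def by blast
  show ?thesis using h[rule_format, of "[a, a, c]" 0 1] by (simp)
qed
lemma alt3_diag12: assumes "alternating scale 3 f" shows "f [c, a, a] = 0"
proof -
  have h: "\<forall>xs i j. length xs = 3 \<and> i < j \<and> j < 3 \<and> xs ! i = xs ! j \<longrightarrow> f xs = 0"
    using assms unfolding alternating_def by blast
  show ?thesis using h[rule_format, of "[c, a, a]" 1 2] by (simp add: numeral_2_eq_2)
qed

lemma pol3_01: assumes "multilinear scale 3 f" "\<And>a c. f [a,a,c] = 0" shows "f [b, a, c] = - f [a, b, c]"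
proof -
  have "f [a+b, a+b, c] = f[a,a,c] + f[a,b,c] + (f[b,a,c] + f[b,b,c])" using assms(1) by (simp add: ml3_lin ac_simps)
  then have "f[a,b,c] + f[b,a,c] = 0" using assms(2) by simp
  then show ?thesis by (simp only: add_eq_0_iff)
qed
lemma pol3_12: assumes "multilinear scale 3 f" "\<And>a c. f [c,a,a] = 0" shows "f [c, b, a] = - f [c, a, b]"
proof -
  have "f [c, a+b, a+b] = f[c,a,a] + f[c,a,b] + (f[c,b,a] + f[c,b,b])" using assms(1) by (simp add: ml3_lin ac_simps)
  then have "f[c,a,b] + f[c,b,a] = 0" using assms(2) by simp
  then show ?thesis by (simp only: add_eq_0_iff)
qed

lemma alt3_anti01: "alternating scale 3 f \<Longrightarrow> f [b, a, c] = - f [a, b, c]"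
  using pol3_01[of f] alt3_diag01[of f] alt_ml[of 3 f] by blast
lemma alt3_anti12: "alternating scale 3 f \<Longrightarrow> f [c, b, a] = - f [c, a, b]"
  using pol3_12[of f] alt3_diag12[of f] alt_ml[of 3 f] by blast

lemma alt3_intro: assumes "multilinear scale 3 f" "\<And>a c. f [a,a,c] = 0" "\<And>a c. f [c,a,a] = 0"
  shows "alternating scale 3 f"
  unfolding alternating_def
proof (intro conjI allI impI)
  fix xs :: "'g list" and i j assume h: "length xs = 3 \<and> i < j \<and> j < 3 \<and> xs ! i = xs ! j"
  then obtain a b c where xs: "xs = [a,b,c]" using len3 by blast
  have a: "f [b, a, c] = - f [a, b, c]" for a b c using pol3_01[OF assms(1,2)] .
  from h have "(i = 0 \<and> j = 1) \<or> (i = 0 \<and> j = 2) \<or> (i = 1 \<and> j = 2)" by auto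
  then show "f xs = 0"
  proof (elim disjE conjE)
    assume "i = 0" "j = 1" then have "b = a" using h xs by auto
    then show ?thesis using xs assms(2) by simp
  next
    assume "i = 1" "j = 2" then have "c = b" using h xs by (auto simp: numeral_2_eq_2)
    then show ?thesis using xs assms(3) by simp
  next
    assume "i = 0" "j = 2" then have "c = a" using h xs by (auto simp: numeral_2_eq_2)
    then show ?thesis using xs a[of b a a] assms(3)[of b a] by simp
  qed
qed (rule assms(1))

lemma dL1_dCE1: "dL br 1 f = dCE br 1 f"
proof
  fix xs :: "'g list"
  show "dL br 1 f xs = dCE br 1 f xs"
  proof (cases "length xs = 2")
    case True then obtain a b where xs: "xs = [a,b]" using len2 by blast
    have "dL br 1 f [a,b] = dCE br 1 f [a,b]" unfolding dL1_expl dCE1_expl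
      using br_anti[OF lie, of "f [a]" b] by simp
    then show ?thesis using xs by simp
  qed (simp add: dL_def dCE_def)
qed

lemma dL2_dCE2: assumes "alternating scale 2 f" shows "dL br 2 f = dCE br 2 f"
proof
  fix xs :: "'g list"
  show "dL br 2 f xs = dCE br 2 f xs"
  proof (cases "length xs = 3")
    case True then obtain a b c where "xs = [a,b,c]" using len3 by blast
    then show ?thesis using alt2_anti[OF assms, of "br b c" a] alt2_anti[OF assms, of "br a c" b]
      by (simp add: dL2_expl dCE2_expl br_anti[OF lie, of "f [a,b]" c])
  qed (simp add: dL_def dCE_def)
qed

lemma dL3_dCE3: assumes "alternating scale 3 f" shows "dL br 3 f = dCE br 3 f"
proof
  fix xs :: "'g list"
  show "dL br 3 f xs = dCE br 3 f xs"
  proof (cases "length xs = 4")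
    case True then obtain a b c d where "xs = [a,b,c,d]" using len4 by blast
    note a01 = alt3_anti01[OF assms] and a12 = alt3_anti12[OF assms]
    have cyc: "f [x, y, w] = f [w, x, y]" for x y w using a12[of x y w] a01[of x w y] by simp
    show ?thesis using \<open>xs = [a,b,c,d]\<close> a01[of b "br a c" d] a01[of a "br b c" d] cyc[of b c "br a d"] cyc[of a c "br b d"] cyc[of a b "br c d"]
      by (simp add: dL3_expl dCE3_expl br_anti[OF lie, of "f [a,b,c]" d])
  qed (simp add: dL_def dCE_def)
qed

lemma brg: "br (g l) y = - br y (g l)" by (rule br_anti[OF lie])

lemma d2zero: assumes g: "multilinear scale 2 g" shows "dL br 3 (dL br 2 g) = 0"
proof
  fix xs :: "'g list"
  show "dL br 3 (dL br 2 g) xs = 0 xs"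
  proof (cases "length xs = 4")
    case True then obtain a b c d where "xs = [a,b,c,d]" using len4 by blast
    then show ?thesis
      apply (simp only: dL3_expl dL2_expl zero_fun_apply)
      apply (simp only: brl ml2_lin[OF g] jac[OF lie] brg[of g])
      apply (simp add: algebra_simps)
      done
  qed (simp add: dL_def)
qed

end


definition quad :: "('k::field \<Rightarrow> 'g::ab_group_add \<Rightarrow> 'g) \<Rightarrow> ('g \<Rightarrow> 'g) \<Rightarrow> bool" where
  "quad scale e \<longleftrightarrow> (\<forall>k x. e (scale k x) = scale k (scale k (e x))) \<and>
     (\<forall>x x' y. e (x + x' + y) - e (x + x') - e y = (e (x + y) - e x - e y) + (e (x' + y) - e x' - e y)) \<and>
     (\<forall>k x y. e (scale k x + y) - e (scale k x) - e y = scale k (e (x + y) - e x - e y))"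

context
  fixes scale :: "'k::field \<Rightarrow> 'g::ab_group_add \<Rightarrow> 'g"
  assumes VS: "vector_space scale"
begin

interpretation vs: vector_space scale by (rule VS)
interpretation vp: vector_space_pair scale scale by (simp add: VS vector_space_pair_def)

lemma quad_lift: "\<exists>L. (\<forall>e x x' y. L e (x + x') y = L e x y + L e x' y) \<and>
   (\<forall>e x y y'. L e x (y + y') = L e x y + L e x y') \<and>
   (\<forall>e k x y. L e (scale k x) y = scale k (L e x y)) \<and>
   (\<forall>e k x y. L e x (scale k y) = scale k (L e x y)) \<and>
   (\<forall>e1 e2 x y. L (\<lambda>v. e1 v + e2 v) x y = L e1 x y + L e2 x y) \<and>
   (\<forall>e k x y. L (\<lambda>v. scale k (e v)) x y = scale k (L e x y)) \<and>
   (\<forall>e. quad scale e \<longrightarrow> (\<forall>y. L e y y = e y))"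
proof -
  obtain B where B: "vs.independent B" "UNIV \<subseteq> vs.span B"
    using vs.basis_exists[of UNIV] by blast
  obtain r :: "'g rel" where r: "well_order_on UNIV r" using well_order_on by blast
  have ranti: "(x, y) \<in> r \<Longrightarrow> (y, x) \<in> r \<Longrightarrow> x = y" for x y
    using r unfolding well_order_on_def linear_order_on_def partial_order_on_def antisym_on_def by blast
  have rtot: "x \<noteq> y \<Longrightarrow> (x, y) \<notin> r \<Longrightarrow> (y, x) \<in> r" for x y
    using r unfolding well_order_on_def linear_order_on_def total_on_def by blast
  define Gm where "Gm e b1 b2 = (if b1 = b2 then e b1 else if (b1, b2) \<in> r then e (b1 + b2) - e b1 - e b2 else 0)"
    for e :: "'g \<Rightarrow> 'g" and b1 b2
  define L where "L e x y = vp.construct B (\<lambda>b1. vp.construct B (\<lambda>b2. Gm e b1 b2) y) x" for e x y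
  have linc: "Vector_Spaces.linear scale scale (vp.construct B h)" for h using vp.linear_construct[OF B(1)] .
  have cadd: "vp.construct B h (u + v) = vp.construct B h u + vp.construct B h v" for h u v
    using linc[of h] unfolding Vector_Spaces.linear_iff by blast
  have cscale: "vp.construct B h (scale k u) = scale k (vp.construct B h u)" for h k u
    using linc[of h] unfolding Vector_Spaces.linear_iff by blast
  have cfadd: "vp.construct B (\<lambda>b. h1 b + h2 b) u = vp.construct B h1 u + vp.construct B h2 u" for h1 h2 u
    by (rule vp.construct_add[OF B(1)])
  have cfscale: "vp.construct B (\<lambda>b. scale k (h b)) u = scale k (vp.construct B h u)" for h k u
    by (rule vp.construct_scale[OF B(1)])
  have L1: "L e (x + x') y = L e x y + L e x' y" for e x x' y unfolding L_def by (rule cadd)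
  have L2: "L e x (y + y') = L e x y + L e x y'" for e x y y' unfolding L_def by (simp add: cadd cfadd)
  have L3: "L e (scale k x) y = scale k (L e x y)" for e k x y unfolding L_def by (rule cscale)
  have L4: "L e x (scale k y) = scale k (L e x y)" for e k x y unfolding L_def by (simp add: cscale cfscale)
  have Gadd: "Gm (\<lambda>v. e1 v + e2 v) b1 b2 = Gm e1 b1 b2 + Gm e2 b1 b2" for e1 e2 b1 b2
    unfolding Gm_def by (simp add: algebra_simps)
  have Gscale: "Gm (\<lambda>v. scale k (e v)) b1 b2 = scale k (Gm e b1 b2)" for e k b1 b2
    unfolding Gm_def by (simp add: vs.scale_right_diff_distrib)
  have Ga: "vp.construct B (Gm (\<lambda>v. e1 v + e2 v) b1) y = vp.construct B (Gm e1 b1) y + vp.construct B (Gm e2 b1) y" for e1 e2 b1 y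
  proof -
    have "Gm (\<lambda>v. e1 v + e2 v) b1 = (\<lambda>b2. Gm e1 b1 b2 + Gm e2 b1 b2)" by (rule ext, rule Gadd)
    then show ?thesis using cfadd by simp
  qed
  have Gs: "vp.construct B (Gm (\<lambda>v. scale k (e v)) b1) y = scale k (vp.construct B (Gm e b1) y)" for e k b1 y
  proof -
    have "Gm (\<lambda>v. scale k (e v)) b1 = (\<lambda>b2. scale k (Gm e b1 b2))" by (rule ext, rule Gscale)
    then show ?thesis using cfscale by simp
  qed
  have L5: "L (\<lambda>v. e1 v + e2 v) x y = L e1 x y + L e2 x y" for e1 e2 x y
    unfolding L_def Ga by (rule cfadd)
  have L6: "L (\<lambda>v. scale k (e v)) x y = scale k (L e x y)" for e k x y
    unfolding L_def Gs by (rule cfscale)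
  have Lbasis: "L e b1 b2 = Gm e b1 b2" if "b1 \<in> B" "b2 \<in> B" for e b1 b2
    unfolding L_def using that by (simp add: vp.construct_basis[OF B(1)])
  have L7: "L e y y = e y" if q: "quad scale e" for e y
  proof -
    define p where "p x y = e (x + y) - e x - e y" for x y
    have esc: "e (scale k x) = scale k (scale k (e x))" for k x using q unfolding quad_def by blast
    have p1: "p (x + x') y = p x y + p x' y" for x x' y using q unfolding quad_def p_def by blast
    have p2: "p (scale k x) y = scale k (p x y)" for k x y using q unfolding quad_def p_def by blast
    have psym: "p x y = p y x" for x y unfolding p_def by (simp add: add.commute algebra_simps)
    define P where "P x y = L e x y + L e y x - p x y" for x y
    have linP1: "Vector_Spaces.linear scale scale (\<lambda>x. P x y)" for y
      unfolding Vector_Spaces.linear_iff P_def using VS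
      by (simp add: L1 L2 L3 L4 p1 p2 vs.scale_right_diff_distrib vs.scale_right_distrib algebra_simps)
    have linP2: "Vector_Spaces.linear scale scale (\<lambda>y. P x y)" for x
      unfolding Vector_Spaces.linear_iff P_def using VS
      by (simp add: L1 L2 L3 L4 p1 p2 psym[of x] vs.scale_right_diff_distrib vs.scale_right_distrib algebra_simps)
    have lin0: "Vector_Spaces.linear scale scale (\<lambda>x. (0::'g))" unfolding Vector_Spaces.linear_iff using VS by simp
    have Pbb: "P b1 b2 = 0" if "b1 \<in> B" "b2 \<in> B" for b1 b2
    proof (cases "b1 = b2")
      case True
      have "scale (1 + 1) b1 = b1 + b1" by (simp only: vs.scale_left_distrib vs.scale_one)
      then have "e (b1 + b1) = e (scale (1 + 1) b1)" by simp
      also have "\<dots> = (e b1 + e b1) + (e b1 + e b1)"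
        by (simp only: esc, simp only: vs.scale_left_distrib vs.scale_one)
      finally have "e (b1 + b1) = (e b1 + e b1) + (e b1 + e b1)" .
      then show ?thesis using True that unfolding P_def p_def by (simp add: Lbasis Gm_def)
    next
      case False
      show ?thesis
      proof (cases "(b1, b2) \<in> r")
        case True
        then have "(b2, b1) \<notin> r" using ranti False by blast
        then show ?thesis using True False that unfolding P_def by (simp add: Lbasis Gm_def p_def)
      next
        case nr: False
        then have "(b2, b1) \<in> r" using rtot False by blast
        then show ?thesis using nr False that psym[of b1 b2] unfolding P_def by (simp add: Lbasis Gm_def p_def)
      qed
    qed
    have PB: "P x b2 = 0" if "b2 \<in> B" for x b2
    proof -
      have "(\<lambda>x. P x b2) x = (\<lambda>x. 0) x"
        by (rule vp.linear_eq_on[OF linP1[of b2] lin0]) (use B(2) Pbb that in auto)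
      then show ?thesis by simp
    qed
    have P0: "P x y = 0" for x y
    proof -
      have "(\<lambda>y. P x y) y = (\<lambda>y. 0) y"
        by (rule vp.linear_eq_on[OF linP2[of x] lin0]) (use B(2) PB in auto)
      then show ?thesis by simp
    qed
    define Q where "Q y = L e y y - e y" for y
    have Qadd: "Q (y + y') = Q y + Q y'" for y y'
    proof -
      have "P y y' = 0" by (rule P0)
      then show ?thesis unfolding Q_def P_def p_def by (simp add: L1 L2 algebra_simps)
    qed
    have Qscale: "Q (scale k y) = scale k (scale k (Q y))" for k y
      unfolding Q_def by (simp add: L3 L4 esc vs.scale_right_diff_distrib)
    have Qb: "Q b = 0" if "b \<in> B" for b unfolding Q_def using that by (simp add: Lbasis Gm_def)
    have Q0: "Q 0 = 0" using Qscale[of 0 0] by simp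
    have "vs.subspace {y. Q y = 0}"
      unfolding vs.subspace_def using Q0 by (simp add: Qadd Qscale)
    then have "Q y = 0" using vs.span_induct[of y B "\<lambda>y. Q y = 0"] B(2) Qb by auto
    then show ?thesis unfolding Q_def by simp
  qed
  show ?thesis
    apply (rule exI[of _ L])
    apply (intro conjI allI impI)
    apply (rule L1) apply (rule L2) apply (rule L3) apply (rule L4) apply (rule L5) apply (rule L6) apply (erule L7)
    done
qed

end


lemma upd3: "[a,b,c][0 := y] = [y,b,c]" "[a,b,c][1 := y] = [a,y,c]" "[a,b,c][2 := y] = [a,b,y]"
  by (simp_all add: numeral_2_eq_2)
lemma upd2: "[a,b][0 := y] = [y,b]" "[a,b][1 := y] = [a,y]"
  by simp_all
lemma lt3: "(i::nat) < 3 \<Longrightarrow> i = 0 \<or> i = 1 \<or> i = 2" by auto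
lemma lt2: "(i::nat) < 2 \<Longrightarrow> i = 0 \<or> i = 1" by auto

lemma sgnp_add: "sgnp i (u + v) = sgnp i u + sgnp i (v::'a::ab_group_add)" by (simp add: sgnp_def)
lemma sgnp_diff: "sgnp i (u - v) = sgnp i u - sgnp i (v::'a::ab_group_add)" by (simp add: sgnp_def)

definition ee :: "('g \<Rightarrow> 'g \<Rightarrow> 'g) \<Rightarrow> ('g list \<Rightarrow> 'g) \<Rightarrow> 'g \<Rightarrow> 'g" where
  "ee br f x = (THE c. \<forall>a. f [x, x, a] = br c a)"

context
  fixes scale :: "'k::field \<Rightarrow> 'g::ab_group_add \<Rightarrow> 'g" and br :: "'g \<Rightarrow> 'g \<Rightarrow> 'g"
  assumes lie: "lie_algebra scale br" and cpl: "complete_lie scale br"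
begin

interpretation vs: vector_space scale using lie by (simp add: lie_algebra_def)
lemma VS: "vector_space scale" using lie by (simp add: lie_algebra_def)

lemmas brl7 = br_lin[OF lie]
lemmas banti = br_anti[OF lie]

lemma sgnp_scale: "sgnp i (scale k v) = scale k (sgnp i v)" by (simp add: sgnp_def vs.scale_minus_right)

lemma center0: assumes "\<And>a. br a c = 0" shows "c = 0"
proof -
  define G where "G = (\<lambda>xs::'g list. if xs = [] then c else 0)"
  have "alternating scale 0 G" unfolding alternating_def multilinear_def G_def by auto
  moreover have "dCE br 0 G = 0"
  proof
    fix xs :: "'g list"
    show "dCE br 0 G xs = 0 xs"
    proof (cases "length xs = 1")
      case True then obtain a where "xs = [a]" using len1 by blast
      then show ?thesis by (simp add: dCE0_expl G_def assms)
    qed (simp add: dCE_def)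
  qed
  ultimately have "G \<in> ZCE scale br 0" by (simp add: ZCE_def CCE_def)
  moreover have "ZCE scale br 0 = BCE scale br 0" using cpl by (simp add: complete_lie_def)
  moreover have "BCE scale br 0 = {0}" by (simp add: BCE_def)
  ultimately have "G = 0" by blast
  then have "G [] = 0" by simp
  then show ?thesis unfolding G_def by simp
qed

lemma center0': assumes "\<And>a. br c a = 0" shows "c = 0"
proof (rule center0)
  fix a show "br a c = 0" using banti[of a c] assms[of a] by simp
qed

lemma br_inj: assumes "\<And>a. br u a = br v a" shows "u = v"
proof -
  have "br (u - v) a = 0" for a using assms by (simp add: brl7)
  then have "u - v = 0" by (rule center0')
  then show ?thesis by simp
qed

lemma deriv_inner:
  assumes Dadd: "\<And>x y. D (x + y) = D x + D y" and Dscale: "\<And>k x. D (scale k x) = scale k (D x)"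
    and Dder: "\<And>a b. D (br a b) = br a (D b) + br (D a) b"
  shows "\<exists>c. \<forall>a. D a = br c a"
proof -
  define F where "F = (\<lambda>xs::'g list. if length xs = 1 then D (hd xs) else 0)"
  have "multilinear scale 1 F" unfolding multilinear_def F_def
  proof (intro conjI allI impI)
    fix xs :: "'g list" and i :: nat and y z assume "length xs = 1 \<and> i < 1"
    then show "(if length (xs[i := y + z]) = 1 then D (hd (xs[i := y + z])) else 0) =
       (if length (xs[i := y]) = 1 then D (hd (xs[i := y])) else 0) + (if length (xs[i := z]) = 1 then D (hd (xs[i := z])) else 0)"
      using len1[of xs] Dadd by auto
  next
    fix xs :: "'g list" and i :: nat and c y assume "length xs = 1 \<and> i < 1"
    then show "(if length (xs[i := scale c y]) = 1 then D (hd (xs[i := scale c y])) else 0) =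
       scale c (if length (xs[i := y]) = 1 then D (hd (xs[i := y])) else 0)"
      using len1[of xs] Dscale by auto
  qed auto
  then have "alternating scale 1 F" unfolding alternating_def by auto
  moreover have "dCE br 1 F = 0"
  proof
    fix xs :: "'g list"
    show "dCE br 1 F xs = 0 xs"
    proof (cases "length xs = 2")
      case True then obtain a b where xs: "xs = [a,b]" using len2 by blast
      have "dCE br 1 F [a,b] = 0" unfolding dCE1_expl F_def
        using Dder[of a b] banti[of "D a" b] by simp
      then show ?thesis using xs by simp
    qed (simp add: dCE_def)
  qed
  ultimately have "F \<in> ZCE scale br 1" by (simp add: ZCE_def CCE_def)
  then have "F \<in> dCE br 0 ` CCE scale 0" using cpl by (simp add: complete_lie_def BCE_def)
  then obtain G where FG: "F = dCE br 0 G" by blast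
  have "D a = br (- G []) a" for a
  proof -
    have "D a = F [a]" by (simp add: F_def)
    also have "\<dots> = br a (G [])" by (simp add: FG dCE0_expl)
    also have "\<dots> = br (- G []) a" using banti[of a "G []"] by (simp add: brl7)
    finally show ?thesis .
  qed
  then show ?thesis by blast
qed

lemma dL_add: "dL br n (f + g) = dL br n f + dL br n g"
  by (rule ext) (simp add: dL_def sum.distrib brl7 sgnp_add algebra_simps)
lemma dL_diff: "dL br n (f - g) = dL br n f - dL br n g"
  by (rule ext) (simp add: dL_def sum_subtractf brl7 sgnp_diff algebra_simps)
lemma dL_scale: "dL br n (\<lambda>xs. scale k (f xs)) = (\<lambda>xs. scale k (dL br n f xs))"
  by (rule ext) (simp add: dL_def vs.scale_sum_right brl7 sgnp_scale vs.scale_right_distrib)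

lemma dL2_ml: assumes g: "multilinear scale 2 g" shows "multilinear scale 3 (dL br 2 g)"
  unfolding multilinear_def
proof (intro conjI allI impI)
  fix xs :: "'g list" assume "length xs \<noteq> 3" then show "dL br 2 g xs = 0" by (simp add: dL_def)
next
  fix xs :: "'g list" and i :: nat and y z assume h: "length xs = 3 \<and> i < 3"
  then obtain a b c where xs: "xs = [a,b,c]" using len3 by blast
  from h lt3 have "i = 0 \<or> i = 1 \<or> i = 2" by blast
  then show "dL br 2 g (xs[i := y + z]) = dL br 2 g (xs[i := y]) + dL br 2 g (xs[i := z])"
    by (elim disjE) (simp_all only: xs upd3 dL2_expl brl7 ml2_lin[OF lie g], simp_all add: algebra_simps)
next
  fix xs :: "'g list" and i :: nat and k y assume h: "length xs = 3 \<and> i < 3"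
  then obtain a b c where xs: "xs = [a,b,c]" using len3 by blast
  from h lt3 have "i = 0 \<or> i = 1 \<or> i = 2" by blast
  then show "dL br 2 g (xs[i := scale k y]) = scale k (dL br 2 g (xs[i := y]))"
    by (elim disjE) (simp_all only: xs upd3 dL2_expl brl7 ml2_lin[OF lie g],
       simp_all add: vs.scale_right_diff_distrib vs.scale_right_distrib)
qed

lemma dL2_diag: assumes g: "multilinear scale 2 g" shows "dL br 2 g [x, x, a] = - br (g [x, x]) a"
  by (simp add: dL2_expl br_self[OF lie] ml2_lin[OF lie g])

lemma cocycle_diag12:
  assumes h: "multilinear scale 3 h" and z: "dL br 3 h = 0" and d: "\<And>x a. h [x, x, a] = 0"
  shows "h [c, a, a] = 0"
proof -
  have p: "h [a, br c a, b] = - h [br c a, a, b]" for b using pol3_01[OF lie h d] .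
  have "br (h [c, a, a]) b = 0" for b
  proof -
    have "dL br 3 h [c, a, a, b] = 0" using z by simp
    then have "br (h [c, a, a]) b - h [br c a, a, b] - h [a, br c a, b] = 0"
      by (simp add: dL3_expl br_self[OF lie] ml3_lin[OF lie h] d brl7)
    then show ?thesis using p[of b] by (simp add: brl7)
  qed
  then show ?thesis by (rule center0')
qed

lemma ee_unique: assumes "\<And>a. f [x, x, a] = br c a" shows "ee br f x = c"
  unfolding ee_def
proof (rule the_equality)
  show "\<forall>a. f [x, x, a] = br c a" using assms by blast
next
  fix c' assume "\<forall>a. f [x, x, a] = br c' a"
  then show "c' = c"
  proof -
    assume h: "\<forall>a. f [x, x, a] = br c' a"
    show "c' = c"
    proof (rule br_inj)
      fix a from h assms[of a] show "br c' a = br c a" by simp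
    qed
  qed
qed

lemma ee_spec: assumes f: "f \<in> ZL scale br 3" shows "f [x, x, a] = br (ee br f x) a"
proof -
  have fm: "multilinear scale 3 f" and fz: "dL br 3 f = 0" using f by (auto simp: ZL_def CL_def)
  define D where "D a = f [x, x, a]" for a
  have "\<exists>c. \<forall>a. D a = br c a"
  proof (rule deriv_inner)
    show "D (u + v) = D u + D v" for u v unfolding D_def by (rule ml3_add2[OF lie fm])
    show "D (scale k u) = scale k (D u)" for k u unfolding D_def by (rule ml3_scale2[OF lie fm])
    show "D (br u v) = br u (D v) + br (D u) v" for u v
    proof -
      have "dL br 3 f [x, x, u, v] = 0" using fz by simp
      then have E: "br u (f [x, x, v]) + br (f [x, x, u]) v - f [x, x, br u v] = 0"
        by (simp add: dL3_expl br_self[OF lie] ml3_lin[OF lie fm])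
      then have "br u (f [x, x, v]) + br (f [x, x, u]) v = f [x, x, br u v]" by (simp only: right_minus_eq)
      then show ?thesis unfolding D_def by simp
    qed
  qed
  then obtain c where "\<And>a. D a = br c a" by blast
  then have "ee br f x = c" unfolding D_def by (rule ee_unique)
  then show ?thesis using \<open>\<And>a. D a = br c a\<close> D_def by simp
qed

lemma ee_polar: assumes f: "f \<in> ZL scale br 3"
  shows "br (ee br f (u + v) - ee br f u - ee br f v) a = f [u, v, a] + f [v, u, a]"
proof -
  have fm: "multilinear scale 3 f" using f by (auto simp: ZL_def CL_def)
  have "br (ee br f (u + v) - ee br f u - ee br f v) a = f [u+v, u+v, a] - f [u, u, a] - f [v, v, a]"
    by (simp add: brl7 ee_spec[OF f])
  also have "\<dots> = f [u, v, a] + f [v, u, a]" by (simp add: ml3_lin[OF lie fm] algebra_simps)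
  finally show ?thesis .
qed

lemma ee_quad: assumes f: "f \<in> ZL scale br 3" shows "quad scale (ee br f)"
proof -
  have fm: "multilinear scale 3 f" using f by (auto simp: ZL_def CL_def)
  have 1: "ee br f (scale k x) = scale k (scale k (ee br f x))" for k x
    by (rule ee_unique) (simp only: ml3_scale0[OF lie fm] ml3_scale1[OF lie fm], simp add: ee_spec[OF f] brl7)
  have 2: "ee br f (x + x' + y) - ee br f (x + x') - ee br f y =
      (ee br f (x + y) - ee br f x - ee br f y) + (ee br f (x' + y) - ee br f x' - ee br f y)" for x x' y
  proof (rule br_inj)
    fix a
    have "br ((ee br f (x + y) - ee br f x - ee br f y) + (ee br f (x' + y) - ee br f x' - ee br f y)) a
       = (f [x, y, a] + f [y, x, a]) + (f [x', y, a] + f [y, x', a])"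
      by (simp only: br_addl[OF lie] ee_polar[OF f])
    moreover have "br (ee br f (x + x' + y) - ee br f (x + x') - ee br f y) a = f [x + x', y, a] + f [y, x + x', a]"
      by (rule ee_polar[OF f])
    ultimately show "br (ee br f (x + x' + y) - ee br f (x + x') - ee br f y) a =
      br ((ee br f (x + y) - ee br f x - ee br f y) + (ee br f (x' + y) - ee br f x' - ee br f y)) a"
      by (simp add: ml3_lin[OF lie fm] algebra_simps)
  qed
  have 3: "ee br f (scale k x + y) - ee br f (scale k x) - ee br f y = scale k (ee br f (x + y) - ee br f x - ee br f y)" for k x y
  proof (rule br_inj)
    fix a
    have "br (scale k (ee br f (x + y) - ee br f x - ee br f y)) a = scale k (f [x, y, a] + f [y, x, a])"
      by (simp only: br_scalel[OF lie] ee_polar[OF f])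
    moreover have "br (ee br f (scale k x + y) - ee br f (scale k x) - ee br f y) a = f [scale k x, y, a] + f [y, scale k x, a]"
      by (rule ee_polar[OF f])
    ultimately show "br (ee br f (scale k x + y) - ee br f (scale k x) - ee br f y) a =
      br (scale k (ee br f (x + y) - ee br f x - ee br f y)) a"
      by (simp add: ml3_lin[OF lie fm] vs.scale_right_distrib)
  qed
  show ?thesis unfolding quad_def using 1 2 3 by blast
qed

lemma ee_add: assumes "f1 \<in> ZL scale br 3" "f2 \<in> ZL scale br 3"
  shows "ee br (f1 + f2) = (\<lambda>v. ee br f1 v + ee br f2 v)"
  by (rule ext, rule ee_unique) (simp add: ee_spec[OF assms(1)] ee_spec[OF assms(2)] brl7)

lemma ee_scale: assumes "f \<in> ZL scale br 3"
  shows "ee br (\<lambda>xs. scale k (f xs)) = (\<lambda>v. scale k (ee br f v))"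
  by (rule ext, rule ee_unique) (simp add: ee_spec[OF assms] brl7)

end


context
  fixes scale :: "'k::field \<Rightarrow> 'g::ab_group_add \<Rightarrow> 'g" and br :: "'g \<Rightarrow> 'g \<Rightarrow> 'g"
  assumes lie: "lie_algebra scale br" and cpl: "complete_lie scale br"
begin

interpretation vs: vector_space scale using lie by (simp add: lie_algebra_def)

lemmas brl2 = br_lin[OF lie]

lemma alt_diff: "alternating scale n f \<Longrightarrow> alternating scale n g \<Longrightarrow> alternating scale n (f - g)"
  unfolding alternating_def using ml_diff_fun[OF lie] by auto

lemma diag_zero: assumes "\<And>a. br u a = 0" shows "u = 0" using center0'[OF lie cpl] assms by blast

lemma HL2: "HL_iso_H scale br 2"
proof -
  have Z: "ZL scale br 2 = ZCE scale br 2"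
  proof
    show "ZL scale br 2 \<subseteq> ZCE scale br 2"
    proof
      fix f assume "f \<in> ZL scale br 2"
      then have fm: "multilinear scale 2 f" and fz: "dL br 2 f = 0" by (auto simp: ZL_def CL_def)
      have "f [x, x] = 0" for x
      proof (rule diag_zero)
        fix a
        have "dL br 2 f [x, x, a] = 0" using fz by simp
        then show "br (f [x, x]) a = 0" using dL2_diag[OF lie cpl fm] by simp
      qed
      then have fa: "alternating scale 2 f" by (rule alt2_intro[OF lie fm])
      then show "f \<in> ZCE scale br 2" using fz dL2_dCE2[OF lie fa] by (simp add: ZCE_def CCE_def)
    qed
  next
    show "ZCE scale br 2 \<subseteq> ZL scale br 2"
    proof
      fix f assume "f \<in> ZCE scale br 2"
      then have fa: "alternating scale 2 f" and fz: "dCE br 2 f = 0" by (auto simp: ZCE_def CCE_def)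
      then show "f \<in> ZL scale br 2" using dL2_dCE2[OF lie fa] alt_ml[OF lie fa] by (simp add: ZL_def CL_def)
    qed
  qed
  have C1: "CL scale 1 = CCE scale 1" by (auto simp: CL_def CCE_def alternating_def)
  have C1': "CL scale (Suc 0) = CCE scale (Suc 0)" using C1 by simp
  have D1': "dL br (Suc 0) = dCE br (Suc 0)" using dL1_dCE1[OF lie] by (simp add: fun_eq_iff)
  have B: "BL scale br 2 = BCE scale br 2"
    by (simp add: BL_def BCE_def C1' D1')
  have z0: "(0 :: 'g list \<Rightarrow> 'g) \<in> CCE scale 1" by (simp add: CCE_def alternating_def multilinear_def vs.scale_zero_right)
  have "dCE br 1 0 = 0" by (rule ext) (simp add: dCE_def brl2 sgnp_def)
  then have B0: "(0 :: 'g list \<Rightarrow> 'g) \<in> BCE scale br 2" using z0 by (auto simp: BCE_def image_iff intro!: bexI[of _ 0])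
  show ?thesis unfolding HL_iso_H_def quot_iso_def
    apply (rule exI[of _ id])
    using Z B B0 by auto
qed

lemma BL3: "BL scale br 3 = dL br 2 ` CL scale 2" by (simp add: BL_def)
lemma BCE3: "BCE scale br 3 = dCE br 2 ` CCE scale 2" by (simp add: BCE_def)

lemma HL3: "HL_iso_H scale br 3"
proof -
  obtain L where LL: "(\<forall>e x x' y. L e (x + x') y = L e x y + L e x' y) \<and>
   (\<forall>e x y y'. L e x (y + y') = L e x y + L e x y') \<and>
   (\<forall>e k x y. L e (scale k x) y = scale k (L e x y)) \<and>
   (\<forall>e k x y. L e x (scale k y) = scale k (L e x y)) \<and>
   (\<forall>e1 e2 x y. L (\<lambda>v. e1 v + e2 v) x y = L e1 x y + L e2 x y) \<and>
   (\<forall>e k x y. L (\<lambda>v. scale k (e v)) x y = scale k (L e x y)) \<and>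
   (\<forall>e. quad scale e \<longrightarrow> (\<forall>y. L e y y = e y))"
    using quad_lift[OF VS[OF lie cpl]] by (erule exE)
  have L1: "\<And>e x x' y. L e (x + x') y = L e x y + L e x' y" using LL by simp
  have L2: "\<And>e x y y'. L e x (y + y') = L e x y + L e x y'" using LL by simp
  have L3: "\<And>e k x y. L e (scale k x) y = scale k (L e x y)" using LL by simp
  have L4: "\<And>e k x y. L e x (scale k y) = scale k (L e x y)" using LL by simp
  have L5: "\<And>e1 e2 x y. L (\<lambda>v. e1 v + e2 v) x y = L e1 x y + L e2 x y" using LL by simp
  have L6: "\<And>e k x y. L (\<lambda>v. scale k (e v)) x y = scale k (L e x y)" using LL by simp
  have L7: "\<And>e y. quad scale e \<Longrightarrow> L e y y = e y" using LL by simp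
  define G where "G f = (\<lambda>xs. if length xs = 2 then - L (ee br f) (xs ! 0) (xs ! 1) else 0)" for f :: "'g list \<Rightarrow> 'g"
  define phi where "phi f = f - dL br 2 (G f)" for f
  have Gml: "multilinear scale 2 (G f)" for f
    unfolding multilinear_def
  proof (intro conjI allI impI)
    fix xs :: "'g list" assume "length xs \<noteq> 2" then show "G f xs = 0" by (simp add: G_def)
  next
    fix xs :: "'g list" and i :: nat and y z assume h: "length xs = 2 \<and> i < 2"
    then obtain a b where xs: "xs = [a,b]" using len2 by blast
    from h have "i = 0 \<or> i = 1" by auto
    then show "G f (xs[i := y + z]) = G f (xs[i := y]) + G f (xs[i := z])"
      by (elim disjE) (simp_all add: xs G_def L1 L2)
  next
    fix xs :: "'g list" and i :: nat and k y assume h: "length xs = 2 \<and> i < 2"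
    then obtain a b where xs: "xs = [a,b]" using len2 by blast
    from h have "i = 0 \<or> i = 1" by auto
    then show "G f (xs[i := scale k y]) = scale k (G f (xs[i := y]))"
      by (elim disjE) (simp_all add: xs G_def L3 L4 vs.scale_minus_right)
  qed
  have Gdiag: "G f [x, x] = - ee br f x" if "f \<in> ZL scale br 3" for f x
    using L7[OF ee_quad[OF lie cpl that]] by (simp add: G_def)
  have dLG_BL: "dL br 2 (G f) \<in> BL scale br 3" for f
    using Gml[of f] by (auto simp: BL3 CL_def)
  have BL_add: "h1 + h2 \<in> BL scale br 3" if hh: "h1 \<in> BL scale br 3" "h2 \<in> BL scale br 3" for h1 h2
  proof -
    obtain g1 g2 where "g1 \<in> CL scale 2" "g2 \<in> CL scale 2" "h1 = dL br 2 g1" "h2 = dL br 2 g2"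
      using hh by (auto simp: BL3)
    then show ?thesis using dL_add[OF lie cpl, of 2 g1 g2] ml_add_fun[OF lie, of 2 g1 g2]
      by (auto simp: BL3 CL_def intro!: image_eqI[of _ _ "g1 + g2"])
  qed
  have BL_diff: "h1 - h2 \<in> BL scale br 3" if hh: "h1 \<in> BL scale br 3" "h2 \<in> BL scale br 3" for h1 h2
  proof -
    obtain g1 g2 where "g1 \<in> CL scale 2" "g2 \<in> CL scale 2" "h1 = dL br 2 g1" "h2 = dL br 2 g2"
      using hh by (auto simp: BL3)
    then show ?thesis using dL_diff[OF lie cpl, of 2 g1 g2] ml_diff_fun[OF lie, of 2 g1 g2]
      by (auto simp: BL3 CL_def intro!: image_eqI[of _ _ "g1 - g2"])
  qed
  have BL_alt: "h \<in> BCE scale br 3" if hh: "h \<in> BL scale br 3" "alternating scale 3 h" for h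
  proof -
    obtain g where gm: "multilinear scale 2 g" and hg: "h = dL br 2 g" using hh(1) by (auto simp: BL3 CL_def)
    have "g [x, x] = 0" for x
    proof (rule diag_zero)
      fix a
      have "h [x, x, a] = 0" using alt3_diag01[OF lie hh(2)] .
      then show "br (g [x, x]) a = 0" using dL2_diag[OF lie cpl gm] hg by simp
    qed
    then have ga: "alternating scale 2 g" by (rule alt2_intro[OF lie gm])
    then have "h = dCE br 2 g" using hg dL2_dCE2[OF lie ga] by simp
    then show ?thesis using ga by (auto simp: BCE3 CCE_def)
  qed
  have BCE_BL: "h \<in> BL scale br 3" if hh: "h \<in> BCE scale br 3" for h
  proof -
    obtain g where ga: "alternating scale 2 g" and hg: "h = dCE br 2 g" using hh by (auto simp: BCE3 CCE_def)
    then have "h = dL br 2 g" using dL2_dCE2[OF lie ga] by simp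
    then show ?thesis using alt_ml[OF lie ga] by (auto simp: BL3 CL_def)
  qed
  have ZCE_ZL: "h \<in> ZL scale br 3" if "h \<in> ZCE scale br 3" for h
  proof -
    have ha: "alternating scale 3 h" and hz: "dCE br 3 h = 0" using that by (auto simp: ZCE_def CCE_def)
    then show ?thesis using dL3_dCE3[OF lie ha] alt_ml[OF lie ha] by (simp add: ZL_def CL_def)
  qed
  have phi_alt: "alternating scale 3 (phi f)" "phi f \<in> ZCE scale br 3" if f: "f \<in> ZL scale br 3" for f
  proof -
    have fm: "multilinear scale 3 f" and fz: "dL br 3 f = 0" using f by (auto simp: ZL_def CL_def)
    have pm: "multilinear scale 3 (phi f)" unfolding phi_def
      by (rule ml_diff_fun[OF lie fm dL2_ml[OF lie cpl Gml]])
    have pz: "dL br 3 (phi f) = 0" unfolding phi_def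
      by (simp add: dL_diff[OF lie cpl] fz d2zero[OF lie Gml])
    have d1: "phi f [x, x, a] = 0" for x a
      unfolding phi_def using dL2_diag[OF lie cpl Gml, of f x a] Gdiag[OF f, of x] ee_spec[OF lie cpl f, of x a]
      by (simp add: brl2)
    have d2: "phi f [c, a, a] = 0" for c a by (rule cocycle_diag12[OF lie cpl pm pz d1])
    show pa: "alternating scale 3 (phi f)" by (rule alt3_intro[OF lie pm d1 d2])
    show "phi f \<in> ZCE scale br 3" using pz dL3_dCE3[OF lie pa] pa by (simp add: ZCE_def CCE_def)
  qed
  have G_add: "G (f1 + f2) = G f1 + G f2" if "f1 \<in> ZL scale br 3" "f2 \<in> ZL scale br 3" for f1 f2
    by (rule ext) (simp add: G_def ee_add[OF lie cpl that] L5)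
  have G_scale: "G (\<lambda>xs. scale k (f xs)) = (\<lambda>xs. scale k (G f xs))" if "f \<in> ZL scale br 3" for f k
    by (rule ext) (simp add: G_def ee_scale[OF lie cpl that] L6 vs.scale_minus_right)
  have phi_add: "phi (f1 + f2) = phi f1 + phi f2" if "f1 \<in> ZL scale br 3" "f2 \<in> ZL scale br 3" for f1 f2
    unfolding phi_def G_add[OF that] dL_add[OF lie cpl] by (simp add: algebra_simps)
  have phi_scale: "phi (\<lambda>xs. scale k (f xs)) = (\<lambda>xs. scale k (phi f xs))" if "f \<in> ZL scale br 3" for f k
    unfolding phi_def G_scale[OF that] dL_scale[OF lie cpl] by (rule ext) (simp add: vs.scale_right_diff_distrib)
  show ?thesis unfolding HL_iso_H_def quot_iso_def
  proof (rule exI[of _ phi], intro conjI ballI allI)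
    fix a assume "a \<in> ZL scale br 3" then show "phi a \<in> ZCE scale br 3" by (rule phi_alt(2))
  next
    fix a b assume "a \<in> ZL scale br 3" "b \<in> ZL scale br 3" then show "phi (a + b) = phi a + phi b" by (rule phi_add)
  next
    fix c a assume "a \<in> ZL scale br 3" then show "phi (\<lambda>xs. scale c (a xs)) = (\<lambda>xs. scale c (phi a xs))" by (rule phi_scale)
  next
    fix a assume a: "a \<in> ZL scale br 3"
    show "phi a \<in> BCE scale br 3 \<longleftrightarrow> a \<in> BL scale br 3"
    proof
      assume "phi a \<in> BCE scale br 3"
      then have "phi a \<in> BL scale br 3" by (rule BCE_BL)
      then have "phi a + dL br 2 (G a) \<in> BL scale br 3" using dLG_BL by (rule BL_add)
      then show "a \<in> BL scale br 3" by (simp add: phi_def)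
    next
      assume "a \<in> BL scale br 3"
      then have "phi a \<in> BL scale br 3" unfolding phi_def using dLG_BL by (rule BL_diff)
      then show "phi a \<in> BCE scale br 3" using phi_alt(1)[OF a] by (rule BL_alt)
    qed
  next
    fix b assume b: "b \<in> ZCE scale br 3"
    have bz: "b \<in> ZL scale br 3" using b by (rule ZCE_ZL)
    have ba: "alternating scale 3 b" using b by (simp add: ZCE_def CCE_def)
    have "b - phi b = dL br 2 (G b)" by (simp add: phi_def)
    then have "b - phi b \<in> BL scale br 3" using dLG_BL by simp
    moreover have "alternating scale 3 (b - phi b)" by (rule alt_diff[OF ba phi_alt(1)[OF bz]])
    ultimately have "b - phi b \<in> BCE scale br 3" by (rule BL_alt)
    then show "\<exists>a\<in>ZL scale br 3. b - phi a \<in> BCE scale br 3" using bz by blast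
  qed
qed

end

theorem corollary2p9:
  fixes scale :: "'k::field \<Rightarrow> 'g::ab_group_add \<Rightarrow> 'g"
    and br :: "'g \<Rightarrow> 'g \<Rightarrow> 'g"
  assumes "lie_algebra scale br"
    and "complete_lie scale br"
  shows "HL_iso_H scale br 2 \<and> HL_iso_H scale br 3"
  using HL2[OF assms] HL3[OF assms] by blast

end
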